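(* Suppose there is $a\in\{0,1\}$, with $\neg a=1-a$, such that both of the following hold: (1) $E\{Z_i\mid A_i=a,Y_i=1\}<E\{Z_i\mid A_i=\neg a,Y_i=1\}$; (2) $E\{R_i\mid A_i=a,Y_i=1\}>E\{R_i\mid A_i=\neg a,Y_i=1\}$. Then there exists $\epsilon_o>0$ such that $\gamma(\epsilon_o)=0$, i.e. the exponential mechanism $\mathscr{A}_{\epsilon_o}$ is perfectly fair.
   Context: There are $n$ individuals indexed by $\mathcal{N}=\{1,\dots,n\}$. Individual $i$ is described by a random tuple $(X_i,A_i,Y_i)$, where $X_i\in\mathcal{X}$ are observable features, $A_i\in\{0,1\}$ is a protected attribute and $Y_i\in\{0,1\}$ is a hidden qualification state; the tuples $(X_i,A_i,Y_i)$, $i=1,\dots,n$, are i.i.d. with a common distribution $\mathsf{F}$ ($X_i$ may be correlated with $A_i$). A fixed function $r:\mathcal{X}\to\mathcal{R}$ is given, where $\mathcal{R}=\{\rho_1,\dots,\rho_{n'}\}\subset[0,1]$ is finite with $\rho_1=0$, $\rho_{n'}=1$; the qualification score of $i$ is $R_i=r(X_i)$. Conditioning events of the form $\{A_i=a,Y_i=1\}$ are assumed to have positive probability. For $\epsilon\ge 0$, the exponential mechanism $\mathscr{A}_\epsilon$, given realized scores $(r_1,\dots,r_n)$, selects individual $i$ with probability $\exp(\epsilon r_i/2)/\sum_{j=1}^n\exp(\epsilon r_j/2)$. Define the random variable $Z_{i,\epsilon}=\exp(\epsilon R_i/2)/\sum_{j=1}^n\exp(\epsilon R_j/2)$ (so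 $E\{Z_{i,\epsilon}\}$ is the probability that $\mathscr{A}_\epsilon$ selects $i$), and the fairness gap $\gamma(\epsilon)=E\{Z_{i,\epsilon}\mid A_i=0,Y_i=1\}-E\{Z_{i,\epsilon}\mid A_i=1,Y_i=1\}$ (independent of $i$). The mechanism is called perfectly fair when $\gamma(\epsilon)=0$. Let $N_{\max}=|\{i\in\mathcal{N}: R_i=\max_j R_j\}|$ and define $Z_i=0$ if $R_i\ne\max_j R_j$ and $Z_i=1/N_{\max}$ otherwise; $E\{Z_i\}$ is the probability that the non-private algorithm $\mathscr{A}$, which selects uniformly at random among the individuals with the highest score, selects $i$. *)

theory Defs
  imports "HOL-Probability.Probability"
begin

text \<open>An outcome of the population is a function assigning to each individual
  i in {1..n} its tuple (X_i, A_i, Y_i); A_i and Y_i are encoded as booleans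
  (True = 1, False = 0).\<close>

definition population :: "('x \<times> bool \<times> bool) measure \<Rightarrow> nat \<Rightarrow> (nat \<Rightarrow> 'x \<times> bool \<times> bool) measure" where
  "population F n = PiM {1..n} (\<lambda>_. F)"

definition score :: "('x \<Rightarrow> real) \<Rightarrow> nat \<Rightarrow> (nat \<Rightarrow> 'x \<times> bool \<times> bool) \<Rightarrow> real" where
  "score r i \<omega> = r (fst (\<omega> i))"

definition expmech_Z :: "('x \<Rightarrow> real) \<Rightarrow> nat \<Rightarrow> real \<Rightarrow> nat \<Rightarrow> (nat \<Rightarrow> 'x \<times> bool \<times> bool) \<Rightarrow> real" where
  "expmech_Z r n \<epsilon> i \<omega> =
     exp (\<epsilon> * score r i \<omega> / 2) / (\<Sum>j\<in>{1..n}. exp (\<epsilon> * score r j \<omega> / 2))"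

text \<open>Z_i: selection probability of i under the non-private algorithm.\<close>
definition maxscore_Z :: "('x \<Rightarrow> real) \<Rightarrow> nat \<Rightarrow> nat \<Rightarrow> (nat \<Rightarrow> 'x \<times> bool \<times> bool) \<Rightarrow> real" where
  "maxscore_Z r n i \<omega> =
     (let m = Max ((\<lambda>j. score r j \<omega>) ` {1..n});
          Nmax = card {j \<in> {1..n}. score r j \<omega> = m}
      in if score r i \<omega> = m then 1 / real Nmax else 0)"

definition group_event :: "(nat \<Rightarrow> 'x \<times> bool \<times> bool) measure \<Rightarrow> nat \<Rightarrow> bool \<Rightarrow> (nat \<Rightarrow> 'x \<times> bool \<times> bool) set" where
  "group_event M i a = {\<omega> \<in> space M. fst (snd (\<omega> i)) = a \<and> snd (snd (\<omega> i))}"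

definition cexp_event :: "'a measure \<Rightarrow> ('a \<Rightarrow> real) \<Rightarrow> 'a set \<Rightarrow> real" where
  "cexp_event M W B = (\<integral>\<omega>. indicator B \<omega> * W \<omega> \<partial>M) / measure M B"

definition fairness_gap :: "('x \<times> bool \<times> bool) measure \<Rightarrow> ('x \<Rightarrow> real) \<Rightarrow> nat \<Rightarrow> nat \<Rightarrow> real \<Rightarrow> real" where
  "fairness_gap F r n i \<epsilon> =
     (let M = population F n in
      cexp_event M (expmech_Z r n \<epsilon> i) (group_event M i False)
      - cexp_event M (expmech_Z r n \<epsilon> i) (group_event M i True))"

end

theory Submission
  imports Defs
begin


definition ef :: "nat \<Rightarrow> nat \<Rightarrow> (nat \<Rightarrow> real) \<Rightarrow> real \<Rightarrow> real" where
  "ef n i x e = exp (e * x i / 2) / (\<Sum>j\<in>{1..n}. exp (e * x j / 2))"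

lemma ef_deriv:
  assumes "i \<in> {1..n}"
  shows "DERIV (ef n i x) e :> ef n i x e * (x i / 2 - (\<Sum>j\<in>{1..n}. x j / 2 * exp (e * x j / 2)) / (\<Sum>j\<in>{1..n}. exp (e * x j / 2)))"
proof -
  let ?S = "\<lambda>e. (\<Sum>j\<in>{1..n}. exp (e * x j / 2))"
  have Spos: "?S e > 0" using assms by (intro sum_pos) auto
  have "DERIV (\<lambda>e. exp (e * x i / 2) / ?S e) e :>
     (exp (e * x i / 2) * x i * ?S e / 2 - exp (e * x i / 2) * (\<Sum>j\<in>{1..n}. exp (e * x j / 2) * x j / 2)) / (?S e * ?S e)"
    using Spos
    by (auto intro!: derivative_eq_intros simp: power2_eq_square)
  moreover have "(\<Sum>j\<in>{1..n}. exp (e * x j / 2) * x j / 2) = (\<Sum>j\<in>{1..n}. x j * exp (e * x j / 2) / 2)"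
    by (intro sum.cong) auto
  ultimately show ?thesis unfolding ef_def[abs_def] using Spos
    by (simp add: field_simps)
qed

lemma ef_bound_deriv:
  assumes "i \<in> {1..n}" "\<And>j. j \<in> {1..n} \<Longrightarrow> 0 \<le> x j \<and> x j \<le> 1"
  shows "\<bar>ef n i x e * (x i / 2 - (\<Sum>j\<in>{1..n}. x j / 2 * exp (e * x j / 2)) / (\<Sum>j\<in>{1..n}. exp (e * x j / 2)))\<bar> \<le> 1/2"
proof -
  let ?S = "(\<Sum>j\<in>{1..n}. exp (e * x j / 2))"
  let ?T = "(\<Sum>j\<in>{1..n}. x j / 2 * exp (e * x j / 2))"
  have Spos: "?S > 0" using assms by (intro sum_pos) auto
  have T0: "?T \<ge> 0" using assms by (intro sum_nonneg) auto
  have T1: "?T \<le> ?S / 2" unfolding sum_divide_distrib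
    using assms by (intro sum_mono) (auto simp: mult_left_le)
  have f0: "ef n i x e \<ge> 0" unfolding ef_def using Spos by simp
  have f1: "ef n i x e \<le> 1" unfolding ef_def using Spos assms
    member_le_sum[of i "{1..n}" "\<lambda>j. exp (e * x j / 2)"] by simp
  have q0: "?T / ?S \<ge> 0" "?T / ?S \<le> 1/2" using T0 T1 Spos by (auto simp: field_simps)
  have qq: "\<bar>x i / 2 - q\<bar> \<le> 1/2" if "0 \<le> q" "q \<le> 1/2" for q using that assms(2)[OF assms(1)] by (auto simp: abs_if)
  have "\<bar>x i / 2 - ?T / ?S\<bar> \<le> 1/2" by (rule qq[OF q0])
  then have "ef n i x e * \<bar>x i / 2 - ?T / ?S\<bar> \<le> 1 * (1/2)"
    using f0 f1 by (intro mult_mono) auto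
  then show ?thesis using f0 by (simp add: abs_mult)
qed

lemma ef_lip:
  assumes "i \<in> {1..n}" "\<And>j. j \<in> {1..n} \<Longrightarrow> 0 \<le> x j \<and> x j \<le> 1"
  shows "\<bar>ef n i x e - ef n i x e'\<bar> \<le> \<bar>e - e'\<bar> / 2"
proof -
  define F where "F = (\<lambda>z. ef n i x z * (x i / 2 - (\<Sum>j\<in>{1..n}. x j / 2 * exp (z * x j / 2)) / (\<Sum>j\<in>{1..n}. exp (z * x j / 2))))"
  have dd: "DERIV (ef n i x) z :> F z" for z unfolding F_def by (rule ef_deriv[OF assms(1)])
  have main: "\<bar>ef n i x b - ef n i x a\<bar> \<le> \<bar>b - a\<bar> / 2" if ab: "a < b" for a b
  proof -
    obtain z where z: "ef n i x b - ef n i x a = (b - a) * (ef n i x z * (x i / 2 - (\<Sum>j\<in>{1..n}. x j / 2 * exp (z * x j / 2)) / (\<Sum>j\<in>{1..n}. exp (z * x j / 2))))"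
      using MVT2[OF ab, of "ef n i x" F] dd unfolding F_def by blast
    have "\<bar>b - a\<bar> * \<bar>ef n i x z * (x i / 2 - (\<Sum>j\<in>{1..n}. x j / 2 * exp (z * x j / 2)) / (\<Sum>j\<in>{1..n}. exp (z * x j / 2)))\<bar> \<le> \<bar>b - a\<bar> * (1/2)"
      by (intro mult_left_mono ef_bound_deriv assms) auto
    then show ?thesis unfolding z by (simp add: abs_mult)
  qed
  show ?thesis
  proof (cases e e' rule: linorder_cases)
    case less then show ?thesis using main[of e e'] by (simp add: abs_minus_commute)
  next
    case greater then show ?thesis using main[of e' e] by (simp add: abs_minus_commute)
  qed simp
qed

lemma ef_zero: "i \<in> {1..n} \<Longrightarrow> ef n i x 0 = 1 / real n"
  unfolding ef_def by simp

lemma ef_quot_lim: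
  assumes "i \<in> {1..n}"
  shows "(\<lambda>m. (ef n i x (1 / real (Suc m)) - 1 / real n) * real (Suc m)) \<longlonglongrightarrow>
    (1 / real n) * (x i / 2 - (\<Sum>j\<in>{1..n}. x j / 2) / real n)"
proof -
  have D: "DERIV (ef n i x) 0 :> (1 / real n) * (x i / 2 - (\<Sum>j\<in>{1..n}. x j / 2) / real n)"
    using ef_deriv[OF assms, of x 0] ef_zero[OF assms, of x] by simp
  then have L: "((\<lambda>y. (ef n i x y - ef n i x 0) / (y - 0)) \<longlongrightarrow> (1 / real n) * (x i / 2 - (\<Sum>j\<in>{1..n}. x j / 2) / real n)) (at 0)"
    using has_field_derivative_iff by blast
  have S: "filterlim (\<lambda>m. 1 / real (Suc m)) (at (0::real)) sequentially"
  proof (rule filterlim_atI)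
    show "(\<lambda>m. 1 / real (Suc m)) \<longlonglongrightarrow> 0" by (rule LIMSEQ_Suc[OF lim_inverse_n']) 
    show "\<forall>\<^sub>F m in sequentially. 1 / real (Suc m) \<noteq> 0" by simp
  qed
  have "(\<lambda>m. (ef n i x (1 / real (Suc m)) - ef n i x 0) / (1 / real (Suc m) - 0)) \<longlonglongrightarrow> (1 / real n) * (x i / 2 - (\<Sum>j\<in>{1..n}. x j / 2) / real n)"
    by (rule filterlim_compose[OF L S])
  then show ?thesis using ef_zero[OF assms, of x] by simp
qed

lemma exp_pow_lim:
  assumes "d < 0" shows "(\<lambda>m::nat. exp (real m * d / 2)) \<longlonglongrightarrow> 0"
proof -
  have "(\<lambda>m::nat. exp (d/2) ^ m) \<longlonglongrightarrow> 0" using assms by (intro LIMSEQ_power_zero) simp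
  moreover have "exp (real m * d / 2) = exp (d/2) ^ m" for m
    using exp_of_nat_mult[of m "d/2"] by simp
  ultimately show ?thesis by simp
qed

lemma ef_inf_lim:
  assumes "i \<in> {1..n}"
  shows "(\<lambda>m::nat. ef n i x (real m)) \<longlonglongrightarrow>
    (let mx = Max (x ` {1..n}); N = card {j \<in> {1..n}. x j = mx} in if x i = mx then 1 / real N else 0)"
proof -
  define mx where "mx = Max (x ` {1..n})"
  define N where "N = card {j \<in> {1..n}. x j = mx}"
  have fin: "finite (x ` {1..n})" and ne: "x ` {1..n} \<noteq> {}" using assms by auto
  have le: "x j \<le> mx" if "j \<in> {1..n}" for j unfolding mx_def using fin that by auto
  have mxin: "mx \<in> x ` {1..n}" unfolding mx_def using fin ne by (rule Max_in)
  then have Npos: "N > 0" unfolding N_def by (auto simp: card_gt_0_iff)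
  have trm: "(\<lambda>m::nat. exp (real m * (x j - mx) / 2)) \<longlonglongrightarrow> (if x j = mx then 1 else 0)" if "j \<in> {1..n}" for j
    using le[OF that] exp_pow_lim[of "x j - mx"] by (cases "x j = mx") auto
  have sumlim: "(\<lambda>m::nat. \<Sum>j\<in>{1..n}. exp (real m * (x j - mx) / 2)) \<longlonglongrightarrow> (\<Sum>j\<in>{1..n}. if x j = mx then 1 else 0)"
    by (intro tendsto_sum trm)
  have "(\<Sum>j\<in>{1..n}. if x j = mx then 1 else (0::real)) = real N"
    unfolding N_def by (simp add: sum.If_cases Int_def conj_commute)
  note sumlim = sumlim[unfolded this]
  have eq: "ef n i x (real m) = exp (real m * (x i - mx) / 2) / (\<Sum>j\<in>{1..n}. exp (real m * (x j - mx) / 2))" for m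
  proof -
    have "(\<Sum>j\<in>{1..n}. exp (real m * (x j - mx) / 2)) = (\<Sum>j\<in>{1..n}. exp (real m * x j / 2)) / exp (real m * mx / 2)"
      unfolding sum_divide_distrib by (intro sum.cong) (auto simp: right_diff_distrib diff_divide_distrib exp_diff)
    moreover have "exp (real m * (x i - mx) / 2) = exp (real m * x i / 2) / exp (real m * mx / 2)"
      by (auto simp: right_diff_distrib diff_divide_distrib exp_diff)
    ultimately show ?thesis unfolding ef_def by simp
  qed
  have "(\<lambda>m::nat. ef n i x (real m)) \<longlonglongrightarrow> (if x i = mx then 1 else 0) / real N"
    unfolding eq by (intro tendsto_divide trm assms sumlim) (use Npos in auto)
  then show ?thesis unfolding mx_def[symmetric] N_def[symmetric] Let_def by (cases "x i = mx") simp_all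
qed

lemma ef_01:
  assumes "i \<in> {1..n}"
  shows "0 \<le> ef n i x e \<and> ef n i x e \<le> 1"
proof -
  have Spos: "(\<Sum>j\<in>{1..n}. exp (e * x j / 2)) > 0" using assms by (intro sum_pos) auto
  show ?thesis unfolding ef_def using Spos assms
    member_le_sum[of i "{1..n}" "\<lambda>j. exp (e * x j / 2)"] by simp
qed



lemma prod_two_integral:
  fixes F :: "'a measure" and S :: "'a set" and h :: "'a \<Rightarrow> real"
  assumes "prob_space F" "finite I" "i \<in> I" "j \<in> I" "S \<in> sets F" "integrable F h"
    "integrable F (\<lambda>t. indicator S t * h t)"
  shows "(\<integral>\<omega>. indicator S (\<omega> i) * h (\<omega> j) \<partial>PiM I (\<lambda>_. F)) =
     (if j = i then (\<integral>t. indicator S t * h t \<partial>F) else measure F S * (\<integral>t. h t \<partial>F))"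
proof -
  interpret F: prob_space F by fact
  interpret PP: product_prob_space "\<lambda>_. F" I ..
  define f where "f = (\<lambda>k t. (if k = i then indicator S t else 1) * (if k = j then h t else (1::real)))"
  have fin: "emeasure F S < \<top>" using F.emeasure_finite[of S] top.not_eq_extremum by blast
  have int: "integrable F (f k)" for k
    unfolding f_def using assms fin by (cases "k = i"; cases "k = j") (auto simp: F.integrable_const F.emeasure_finite top.not_eq_extremum intro!: integrable_real_indicator)
  have "(\<integral>\<omega>. (\<Prod>k\<in>I. f k (\<omega> k)) \<partial>PiM I (\<lambda>_. F)) = (\<Prod>k\<in>I. integral\<^sup>L F (f k))"
    by (rule PP.product_integral_prod[OF assms(2) int])
  moreover have "(\<Prod>k\<in>I. f k (\<omega> k)) = indicator S (\<omega> i) * h (\<omega> j)" for \<omega>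
    unfolding f_def prod.distrib using assms by (simp add: prod.delta)
  moreover have "(\<Prod>k\<in>I. integral\<^sup>L F (f k)) = (if j = i then (\<integral>t. indicator S t * h t \<partial>F) else measure F S * (\<integral>t. h t \<partial>F))"
  proof (cases "j = i")
    case True
    have "integral\<^sup>L F (f k) = (if k = i then (\<integral>t. indicator S t * h t \<partial>F) else 1)" for k
      unfolding f_def using True by (auto simp: F.prob_space)
    then show ?thesis using True assms by (simp add: prod.delta)
  next
    case False
    have "integral\<^sup>L F (f k) = (if k = i then measure F S else 1) * (if k = j then (\<integral>t. h t \<partial>F) else 1)" for k
      unfolding f_def using False assms by (auto simp: F.prob_space)
    then show ?thesis using False assms by (simp add: prod.distrib prod.delta)
  qed
  ultimately show ?thesis by simp
qed



theorem theorem1: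
  fixes F :: "('x \<times> bool \<times> bool) measure" and r :: "'x \<Rightarrow> real"
    and Rset :: "real set" and n i :: nat and a :: bool
  assumes "prob_space F"
    and "(\<lambda>t. r (fst t)) \<in> borel_measurable F"
    and "\<And>b y. {t \<in> space F. fst (snd t) = b \<and> snd (snd t) = y} \<in> sets F"
    and "finite Rset" and "Rset \<subseteq> {0..1}" and "0 \<in> Rset" and "1 \<in> Rset"
    and "\<And>x. r x \<in> Rset"
    and "\<And>b. measure F {t \<in> space F. fst (snd t) = b \<and> snd (snd t)} > 0"
    and "i \<in> {1..n}"
    and "cexp_event (population F n) (maxscore_Z r n i) (group_event (population F n) i a)
         < cexp_event (population F n) (maxscore_Z r n i) (group_event (population F n) i (\<not> a))"
    and "cexp_event (population F n) (score r i) (group_event (population F n) i a)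
         > cexp_event (population F n) (score r i) (group_event (population F n) i (\<not> a))"
  shows "\<exists>\<epsilon>>0. fairness_gap F r n i \<epsilon> = 0"
proof -
  interpret F: prob_space F by fact
  define I where "I = {1..n}"
  have finI: "finite I" unfolding I_def by simp
  interpret PP: product_prob_space "\<lambda>_::nat. F" I ..
  define M where "M = population F n"
  have M_eq: "M = PiM I (\<lambda>_. F)" unfolding M_def population_def I_def ..
  interpret M: prob_space M unfolding M_eq by (rule prob_space_PiM) (rule F.prob_space_axioms)
  have iI: "i \<in> I" using assms(10) I_def by simp
  define S where "S b = {t \<in> space F. fst (snd t) = b \<and> snd (snd t)}" for b
  have S_sets: "S b \<in> sets F" for b unfolding S_def using assms(3)[of b True] by simp
  have PS: "measure F (S b) > 0" for b unfolding S_def using assms(9) .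
  have sp: "\<omega> j \<in> space F" if "\<omega> \<in> space M" "j \<in> I" for \<omega> j
    using that unfolding M_eq by (auto simp: space_PiM)
  have indG: "indicator (group_event M i b) \<omega> = (indicator (S b) (\<omega> i) :: real)" if "\<omega> \<in> space M" for \<omega> b
    using sp[OF that iI] that unfolding group_event_def S_def by (auto simp: indicator_def)
  have r01: "0 \<le> r x \<and> r x \<le> 1" for x using assms(5) assms(8)[of x] by auto
  have meas_R: "(\<lambda>\<omega>. score r j \<omega>) \<in> borel_measurable M" if "j \<in> I" for j
    unfolding score_def M_eq using measurable_compose[OF measurable_component_singleton[OF that] assms(2)] by simp
  have meas_ind: "(\<lambda>\<omega>. indicator (S b) (\<omega> i) :: real) \<in> borel_measurable M" for b
    unfolding M_eq by (rule measurable_compose[OF measurable_component_singleton[OF iI] borel_measurable_indicator[OF S_sets]])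
  have Ze_eq: "expmech_Z r n e i \<omega> = ef n i (\<lambda>j. score r j \<omega>) e" for e \<omega>
    unfolding expmech_Z_def ef_def ..
  have meas_Ze: "expmech_Z r n e i \<in> borel_measurable M" for e
    unfolding expmech_Z_def using meas_R iI unfolding I_def
    by (intro borel_measurable_divide borel_measurable_sum measurable_compose[OF _ borel_measurable_exp]
          borel_measurable_times borel_measurable_const) auto
  have x01: "\<And>j. j \<in> {1..n} \<Longrightarrow> 0 \<le> score r j \<omega> \<and> score r j \<omega> \<le> 1" for \<omega>
    unfolding score_def using r01 by auto
  have Ze01: "0 \<le> expmech_Z r n e i \<omega> \<and> expmech_Z r n e i \<omega> \<le> 1" for e \<omega>
    unfolding Ze_eq by (rule ef_01[OF assms(10)])
  have intS: "integrable F (indicator (S b) :: _ \<Rightarrow> real)" for b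
    using S_sets[of b] F.emeasure_finite[of "S b"] by (simp add: less_top[symmetric])
  define J where "J b W = (\<integral>\<omega>. indicator (S b) (\<omega> i) * W \<omega> \<partial>M)" for b and W :: "(nat \<Rightarrow> 'x \<times> bool \<times> bool) \<Rightarrow> real"
  have int_ind1: "(\<integral>\<omega>. indicator (S b) (\<omega> i) * 1 \<partial>M) = measure F (S b)" for b
  proof -
    have i1: "integrable F (\<lambda>t. indicator (S b) t * (1::real))" using intS[of b] by simp
    have "(\<integral>\<omega>. indicator (S b) (\<omega> i) * 1 \<partial>M) = (\<integral>t. indicator (S b) t * (1::real) \<partial>F)"
      unfolding M_eq using prod_two_integral[OF assms(1) finI iI iI S_sets F.integrable_const i1] by simp
    also have "\<dots> = measure F (S b \<inter> space F)" by simp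
    also have "S b \<inter> space F = S b" unfolding S_def by auto
    finally show ?thesis .
  qed
  have GS: "group_event M i b \<subseteq> space M" for b unfolding group_event_def by auto
  have cexp_eq: "cexp_event M W (group_event M i b) = J b W / measure F (S b)" for W b
  proof -
    have "measure M (group_event M i b) = integral\<^sup>L M (indicator (group_event M i b))"
      using GS[of b] by (subst Bochner_Integration.integral_indicator) (simp only: Int_absorb2)
    also have "\<dots> = (\<integral>\<omega>. indicator (S b) (\<omega> i) * 1 \<partial>M)"
      by (intro Bochner_Integration.integral_cong) (simp_all add: indG)
    finally have m: "measure M (group_event M i b) = measure F (S b)" using int_ind1 by simp
    have "(\<integral>\<omega>. indicator (group_event M i b) \<omega> * W \<omega> \<partial>M) = J b W"
      unfolding J_def by (intro Bochner_Integration.integral_cong) (simp_all add: indG)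
    then show ?thesis unfolding cexp_event_def m by simp
  qed
  have meas_R': "(\<lambda>\<omega>. score r j \<omega>) \<in> borel_measurable M" if "j \<in> {1..n}" for j
    using meas_R that unfolding I_def by simp
  have intJ: "integrable M (\<lambda>\<omega>. indicator (S b) (\<omega> i) * W \<omega>)"
    if W: "W \<in> borel_measurable M" "\<And>\<omega>. \<bar>W \<omega>\<bar> \<le> B" for W and B :: real and b
  proof (rule M.integrable_const_bound[where B=B])
    show "AE \<omega> in M. norm (indicator (S b) (\<omega> i) * W \<omega>) \<le> B"
      using W(2) by (intro AE_I2) (auto simp: indicator_def intro: order_trans[OF abs_ge_zero])
    show "(\<lambda>\<omega>. indicator (S b) (\<omega> i) * W \<omega>) \<in> borel_measurable M"
      using W(1) meas_ind by (intro borel_measurable_times) auto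
  qed
  have absR: "\<bar>score r j \<omega>\<bar> \<le> 1" for j \<omega> unfolding score_def using r01 by auto
  have absZe: "\<bar>expmech_Z r n e i \<omega>\<bar> \<le> 1" for e \<omega> using Ze01[of e \<omega>] by auto
  define P where "P b = measure F (S b)" for b
  have Ppos: "P b > 0" for b unfolding P_def by (rule PS)
  define G where "G e = fairness_gap F r n i e" for e
  have G_eq: "G e = J False (expmech_Z r n e i) / P False - J True (expmech_Z r n e i) / P True" for e
    unfolding G_def fairness_gap_def Let_def M_def[symmetric] cexp_eq P_def ..
  have Jlip: "\<bar>J b (expmech_Z r n e i) - J b (expmech_Z r n e' i)\<bar> \<le> \<bar>e - e'\<bar> / 2" for b e e'
  proof -
    have i1: "integrable M (\<lambda>\<omega>. indicator (S b) (\<omega> i) * expmech_Z r n e i \<omega>)" for e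
      by (rule intJ[OF meas_Ze absZe])
    have pt: "\<bar>indicator (S b) (\<omega> i) * expmech_Z r n e i \<omega> - indicator (S b) (\<omega> i) * expmech_Z r n e' i \<omega>\<bar> \<le> \<bar>e - e'\<bar> / 2" for \<omega>
    proof -
      have "\<bar>expmech_Z r n e i \<omega> - expmech_Z r n e' i \<omega>\<bar> \<le> \<bar>e - e'\<bar> / 2"
        unfolding Ze_eq by (rule ef_lip[OF assms(10) x01])
      then show ?thesis by (auto simp: indicator_def)
    qed
    have "J b (expmech_Z r n e i) - J b (expmech_Z r n e' i) =
        (\<integral>\<omega>. indicator (S b) (\<omega> i) * expmech_Z r n e i \<omega> - indicator (S b) (\<omega> i) * expmech_Z r n e' i \<omega> \<partial>M)"
      unfolding J_def by (rule Bochner_Integration.integral_diff[OF i1 i1, symmetric])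
    also have "\<bar>\<dots>\<bar> \<le> (\<integral>\<omega>. \<bar>indicator (S b) (\<omega> i) * expmech_Z r n e i \<omega> - indicator (S b) (\<omega> i) * expmech_Z r n e' i \<omega>\<bar> \<partial>M)"
      by (rule integral_abs_bound)
    also have "\<dots> \<le> (\<integral>\<omega>. \<bar>e - e'\<bar> / 2 \<partial>M)"
      using pt by (intro Bochner_Integration.integral_mono) (auto intro!: Bochner_Integration.integrable_diff i1)
    also have "\<dots> = \<bar>e - e'\<bar> / 2" by (simp add: M.prob_space)
    finally show ?thesis .
  qed
  define C where "C = 1 / (2 * P False) + 1 / (2 * P True)"
  have C0: "C \<ge> 0" unfolding C_def using Ppos[of True] Ppos[of False] by simp
  have Glip: "\<bar>G e - G e'\<bar> \<le> C * \<bar>e - e'\<bar>" for e e'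
  proof -
    have div: "\<bar>x / p\<bar> \<le> \<bar>e - e'\<bar> / (2 * p)" if "\<bar>x\<bar> \<le> \<bar>e - e'\<bar> / 2" "p > 0" for x p
      using that by (simp add: abs_div divide_right_mono field_simps)
    have "G e - G e' = (J False (expmech_Z r n e i) - J False (expmech_Z r n e' i)) / P False
       - (J True (expmech_Z r n e i) - J True (expmech_Z r n e' i)) / P True"
      unfolding G_eq by (simp add: diff_divide_distrib)
    then have "\<bar>G e - G e'\<bar> \<le> \<bar>(J False (expmech_Z r n e i) - J False (expmech_Z r n e' i)) / P False\<bar>
       + \<bar>(J True (expmech_Z r n e i) - J True (expmech_Z r n e' i)) / P True\<bar>" by linarith
    also have "\<dots> \<le> \<bar>e - e'\<bar> / (2 * P False) + \<bar>e - e'\<bar> / (2 * P True)"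
      by (intro add_mono div Jlip Ppos)
    also have "\<dots> = C * \<bar>e - e'\<bar>" unfolding C_def by (simp add: field_simps)
    finally show ?thesis .
  qed
  have Gcont: "continuous_on X G" for X
    by (rule lipschitz_on_continuous_on[OF lipschitz_onI[OF _ C0]]) (simp add: dist_real_def Glip)
  have ivt: "\<exists>e>0. G e = 0" if "0 < d" "d \<le> T" "G d * G T \<le> 0" for d T
  proof -
    have "\<exists>x. d \<le> x \<and> x \<le> T \<and> G x = 0"
    proof (cases "G d \<le> 0")
      case True
      then have "G T \<ge> 0 \<or> G d = 0" using that(3) by (auto simp: mult_le_0_iff)
      then show ?thesis
      proof
        assume "G T \<ge> 0" then show ?thesis using IVT'[of G d 0 T] True that Gcont by auto
      qed (use that in auto)
    next
      case False
      then have "G T \<le> 0" using that(3) by (auto simp: mult_le_0_iff)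
      then show ?thesis using IVT2'[of G T 0 d] False that Gcont by auto
    qed
    then obtain x where "d \<le> x" "G x = 0" by blast
    then show ?thesis using that(1) by (intro exI[of _ x]) auto
  qed
  have Zlim: "(\<lambda>m. expmech_Z r n (real m) i \<omega>) \<longlonglongrightarrow> maxscore_Z r n i \<omega>" for \<omega>
    unfolding Ze_eq maxscore_Z_def using ef_inf_lim[OF assms(10), of "\<lambda>j. score r j \<omega>"] by simp
  have meas_Zm: "maxscore_Z r n i \<in> borel_measurable M"
    by (rule borel_measurable_LIMSEQ_real[OF Zlim meas_Ze])
  have JZlim: "(\<lambda>m. J b (expmech_Z r n (real m) i)) \<longlonglongrightarrow> J b (maxscore_Z r n i)" for b
    unfolding J_def
  proof (rule integral_dominated_convergence[where w="\<lambda>_. 1"])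
    show "(\<lambda>\<omega>. indicator (S b) (\<omega> i) * maxscore_Z r n i \<omega>) \<in> borel_measurable M"
      using meas_Zm meas_ind by (intro borel_measurable_times) auto
    show "(\<lambda>\<omega>. indicator (S b) (\<omega> i) * expmech_Z r n (real m) i \<omega>) \<in> borel_measurable M" for m
      using meas_Ze meas_ind by (intro borel_measurable_times) auto
    show "integrable M (\<lambda>_. 1::real)" by simp
    show "AE \<omega> in M. (\<lambda>m. indicator (S b) (\<omega> i) * expmech_Z r n (real m) i \<omega>) \<longlonglongrightarrow> indicator (S b) (\<omega> i) * maxscore_Z r n i \<omega>"
      by (intro AE_I2 tendsto_mult_left Zlim)
    show "AE \<omega> in M. norm (indicator (S b) (\<omega> i) * expmech_Z r n (real m) i \<omega>) \<le> 1" for m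
      using absZe by (intro AE_I2) (auto simp: indicator_def)
  qed
  define DZ where "DZ = J False (maxscore_Z r n i) / P False - J True (maxscore_Z r n i) / P True"
  have Glarge: "(\<lambda>m. G (real m)) \<longlonglongrightarrow> DZ"
    unfolding G_eq DZ_def by (intro tendsto_diff tendsto_divide JZlim tendsto_const) (use Ppos[of True] Ppos[of False] in auto)
  define c where "c \<omega> = (1 / real n) * (score r i \<omega> / 2 - (\<Sum>j\<in>{1..n}. score r j \<omega> / 2) / real n)" for \<omega>
  define D where "D m \<omega> = (expmech_Z r n (1 / real (Suc m)) i \<omega> - 1 / real n) * real (Suc m)" for m \<omega>
  have Dlim: "(\<lambda>m. D m \<omega>) \<longlonglongrightarrow> c \<omega>" for \<omega>
    unfolding D_def c_def Ze_eq using ef_quot_lim[OF assms(10), of "\<lambda>j. score r j \<omega>"] by simp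
  have Dbound: "\<bar>D m \<omega>\<bar> \<le> 1/2" for m \<omega>
  proof -
    have "\<bar>ef n i (\<lambda>j. score r j \<omega>) (1 / real (Suc m)) - ef n i (\<lambda>j. score r j \<omega>) 0\<bar> \<le> \<bar>1 / real (Suc m) - 0\<bar> / 2"
      by (rule ef_lip[OF assms(10) x01])
    then have "\<bar>expmech_Z r n (1 / real (Suc m)) i \<omega> - 1 / real n\<bar> \<le> (1 / real (Suc m)) / 2"
      unfolding Ze_eq ef_zero[OF assms(10)] by simp
    then have "\<bar>expmech_Z r n (1 / real (Suc m)) i \<omega> - 1 / real n\<bar> * real (Suc m) \<le> (1 / real (Suc m)) / 2 * real (Suc m)"
      by (rule mult_right_mono) simp
    moreover have "(1 / real (Suc m)) / 2 * real (Suc m) = 1/2" by simp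
    ultimately show ?thesis unfolding D_def by (simp only: abs_mult abs_of_nat)
  qed
  have meas_D: "D m \<in> borel_measurable M" for m
    unfolding D_def using meas_Ze by (intro borel_measurable_times borel_measurable_diff borel_measurable_const) auto
  have meas_c: "c \<in> borel_measurable M"
    unfolding c_def using meas_R' assms(10)
    by (intro borel_measurable_times borel_measurable_diff borel_measurable_divide borel_measurable_sum borel_measurable_const) auto
  have JDlim: "(\<lambda>m. J b (D m)) \<longlonglongrightarrow> J b c" for b
    unfolding J_def
  proof (rule integral_dominated_convergence[where w="\<lambda>_. 1/2"])
    show "(\<lambda>\<omega>. indicator (S b) (\<omega> i) * c \<omega>) \<in> borel_measurable M"
      using meas_c meas_ind by (intro borel_measurable_times) auto
    show "(\<lambda>\<omega>. indicator (S b) (\<omega> i) * D m \<omega>) \<in> borel_measurable M" for m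
      using meas_D meas_ind by (intro borel_measurable_times) auto
    show "integrable M (\<lambda>_. 1/2::real)" by simp
    show "AE \<omega> in M. (\<lambda>m. indicator (S b) (\<omega> i) * D m \<omega>) \<longlonglongrightarrow> indicator (S b) (\<omega> i) * c \<omega>"
      by (intro AE_I2 tendsto_mult_left Dlim)
    show "AE \<omega> in M. norm (indicator (S b) (\<omega> i) * D m \<omega>) \<le> 1/2" for m
      using Dbound by (intro AE_I2) (auto simp: indicator_def)
  qed
  have JZD: "J b (expmech_Z r n (1 / real (Suc m)) i) = J b (D m) / real (Suc m) + P b / real n" for b m
  proof -
    have iD: "integrable M (\<lambda>\<omega>. indicator (S b) (\<omega> i) * D m \<omega>)" by (rule intJ[OF meas_D Dbound])
    have i1: "integrable M (\<lambda>\<omega>. indicator (S b) (\<omega> i) * (1::real))" by (rule intJ[of "\<lambda>_. 1" 1]) auto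
    have "J b (expmech_Z r n (1 / real (Suc m)) i) =
       (\<integral>\<omega>. (indicator (S b) (\<omega> i) * D m \<omega>) / real (Suc m) + (indicator (S b) (\<omega> i) * 1) / real n \<partial>M)"
      unfolding J_def D_def by (intro Bochner_Integration.integral_cong) (auto simp: field_simps)
    also have "\<dots> = J b (D m) / real (Suc m) + (\<integral>\<omega>. indicator (S b) (\<omega> i) * 1 \<partial>M) / real n"
      unfolding J_def using iD i1 by (simp del: mult_1_right)
    finally show ?thesis unfolding int_ind1 P_def .
  qed
  define Q where "Q m = J False (D m) / P False - J True (D m) / P True" for m
  have GQ: "G (1 / real (Suc m)) = Q m / real (Suc m)" for m
  proof -
    have npos: "real n > 0" using assms(10) by simp
    have h0: "(x / s + p / q) / p = x / p / s + 1 / q" if "p > 0" "s > 0" "q > 0" for x p s q :: real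
      using that by (simp add: field_simps)
    have h: "(x / real (Suc m) + p / real n) / p = x / p / real (Suc m) + 1 / real n" if "p > 0" for x p
      using h0[OF that _ npos] by simp
    show ?thesis unfolding G_eq JZD Q_def h[OF Ppos] by (simp add: diff_divide_distrib)
  qed
  have Qlim: "Q \<longlonglongrightarrow> J False c / P False - J True c / P True"
    unfolding Q_def[abs_def] by (intro tendsto_diff tendsto_divide JDlim tendsto_const) (use Ppos[of True] Ppos[of False] in auto)
  have h1: "J a (maxscore_Z r n i) / P a < J (\<not> a) (maxscore_Z r n i) / P (\<not> a)"
    using assms(11) unfolding M_def[symmetric] cexp_eq P_def .
  have h2: "J a (score r i) / P a > J (\<not> a) (score r i) / P (\<not> a)"
    using assms(12) unfolding M_def[symmetric] cexp_eq P_def .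
  have n2: "n \<ge> 2"
  proof (rule ccontr)
    assume "\<not> n \<ge> 2"
    then have n1: "n = 1" "i = 1" using assms(10) by auto
    have cc: "{j. j = Suc 0 \<and> score r j \<omega> = score r (Suc 0) \<omega>} = {Suc 0}" for \<omega> by auto
    have "maxscore_Z r n i \<omega> = 1" for \<omega> unfolding maxscore_Z_def n1 by (simp add: cc)
    then have "J b (maxscore_Z r n i) = P b" for b
      unfolding J_def P_def int_ind1[symmetric] by simp
    then show False using h1 Ppos[of a] Ppos[of "\<not> a"] by simp
  qed
  define ER where "ER = (\<integral>t. r (fst t) \<partial>F)"
  have intH: "integrable F (\<lambda>t. r (fst t))"
    by (rule F.integrable_const_bound[where B=1]) (use r01 assms(2) in \<open>auto intro!: AE_I2\<close>)
  have intSH: "integrable F (\<lambda>t. indicator (S b) t * r (fst t))" for b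
    by (rule F.integrable_const_bound[where B=1])
       (use r01 assms(2) S_sets in \<open>auto intro!: AE_I2 borel_measurable_times simp: indicator_def\<close>)
  have JR: "J b (score r j) = P b * ER" if "j \<in> {1..n}" "j \<noteq> i" for b j
  proof -
    have jI: "j \<in> I" using that I_def by simp
    show ?thesis
      unfolding J_def score_def M_eq P_def ER_def
      using prod_two_integral[OF assms(1) finI iI jI S_sets intH intSH] that by simp
  qed
  have sumJR: "(\<Sum>j\<in>{1..n}. J b (score r j) / 2) = (J b (score r i) + (real n - 1) * (P b * ER)) / 2" for b
  proof -
    have "(\<Sum>j\<in>{1..n}. J b (score r j) / 2) = J b (score r i) / 2 + (\<Sum>j\<in>{1..n} - {i}. J b (score r j) / 2)"
      using assms(10) by (simp add: sum.remove)
    also have "(\<Sum>j\<in>{1..n} - {i}. J b (score r j) / 2) = (\<Sum>j\<in>{1..n} - {i}. P b * ER / 2)"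
      by (intro sum.cong) (auto simp: JR)
    also have "\<dots> = (real n - 1) * (P b * ER / 2)"
      using assms(10) by (simp add: card_Diff_singleton of_nat_diff)
    finally show ?thesis by (simp add: field_simps)
  qed
  have Jc: "J b c = (1 / real n) * (J b (score r i) / 2 - (\<Sum>j\<in>{1..n}. J b (score r j) / 2) / real n)" for b
  proof -
    have iR: "integrable M (\<lambda>\<omega>. indicator (S b) (\<omega> i) * score r j \<omega>)" if "j \<in> {1..n}" for j
      by (rule intJ[OF meas_R'[OF that] absR])
    have "J b c = (\<integral>\<omega>. (1 / real n) * ((indicator (S b) (\<omega> i) * score r i \<omega>) / 2
        - (\<Sum>j\<in>{1..n}. (indicator (S b) (\<omega> i) * score r j \<omega>) / 2) / real n) \<partial>M)"
      unfolding J_def c_def by (intro Bochner_Integration.integral_cong)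
        (simp_all add: sum_distrib_left sum_divide_distrib algebra_simps)
    also have "\<dots> = (1 / real n) * (J b (score r i) / 2 - (\<Sum>j\<in>{1..n}. J b (score r j) / 2) / real n)"
    proof -
      have a1: "integrable M (\<lambda>\<omega>. (indicator (S b) (\<omega> i) * score r i \<omega>) / 2)"
        using iR[OF assms(10)] by (rule Bochner_Integration.integrable_divide)
      have a2: "integrable M (\<lambda>\<omega>. (indicator (S b) (\<omega> i) * score r j \<omega>) / 2)" if "j \<in> {1..n}" for j
        using iR[OF that] by (rule Bochner_Integration.integrable_divide)
      have a3: "integrable M (\<lambda>\<omega>. (\<Sum>j\<in>{1..n}. (indicator (S b) (\<omega> i) * score r j \<omega>) / 2) / real n)"
        by (intro Bochner_Integration.integrable_divide Bochner_Integration.integrable_sum a2)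
      have "(\<integral>\<omega>. (1 / real n) * ((indicator (S b) (\<omega> i) * score r i \<omega>) / 2
          - (\<Sum>j\<in>{1..n}. (indicator (S b) (\<omega> i) * score r j \<omega>) / 2) / real n) \<partial>M)
        = (1 / real n) * ((\<integral>\<omega>. (indicator (S b) (\<omega> i) * score r i \<omega>) / 2 \<partial>M)
          - (\<integral>\<omega>. (\<Sum>j\<in>{1..n}. (indicator (S b) (\<omega> i) * score r j \<omega>) / 2) / real n \<partial>M))"
        by (simp only: Bochner_Integration.integral_mult_right_zero Bochner_Integration.integral_diff[OF a1 a3])
      also have "(\<integral>\<omega>. (\<Sum>j\<in>{1..n}. (indicator (S b) (\<omega> i) * score r j \<omega>) / 2) / real n \<partial>M)
          = (\<Sum>j\<in>{1..n}. (\<integral>\<omega>. indicator (S b) (\<omega> i) * score r j \<omega> \<partial>M) / 2) / real n"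
        by (simp only: Bochner_Integration.integral_divide_zero Bochner_Integration.integral_sum[OF a2])
      finally show ?thesis unfolding J_def by simp
    qed
    finally show ?thesis .
  qed
  define K where "K b = J b (score r i) / P b" for b
  define L where "L = J False c / P False - J True c / P True"
  have L_eq: "L = (1 / real n) * (1/2) * (1 - 1 / real n) * (K False - K True)"
    unfolding L_def Jc sumJR K_def using Ppos[of True] Ppos[of False] n2
    by (simp add: field_simps)
  have coef: "(1 / real n) * (1/2) * (1 - 1 / real n) > 0" using n2 by simp
  have LDZ: "L * DZ < 0"
  proof (cases a)
    case True
    have k: "K False - K True < 0" using h2 True unfolding K_def by simp
    have "L < 0" unfolding L_eq by (rule mult_pos_neg[OF coef k])
    moreover have "DZ > 0" using h1 True unfolding DZ_def by simp
    ultimately show ?thesis by (simp add: mult_neg_pos)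
  next
    case False
    have k: "K False - K True > 0" using h2 False unfolding K_def by simp
    have "L > 0" unfolding L_eq by (rule mult_pos_pos[OF coef k])
    moreover have "DZ < 0" using h1 False unfolding DZ_def by simp
    ultimately show ?thesis by (simp add: mult_pos_neg)
  qed
  have ev1: "eventually (\<lambda>m. Q m * L > 0) sequentially"
  proof -
    have "(\<lambda>m. Q m * L) \<longlonglongrightarrow> L * L" using Qlim unfolding L_def by (intro tendsto_mult_right)
    moreover have "L * L > 0" using LDZ by (cases "L > 0") (auto intro: mult_pos_pos mult_neg_neg simp: not_less le_less)
    ultimately show ?thesis by (rule order_tendstoD(1))
  qed
  have ev2: "eventually (\<lambda>m. G (real m) * DZ > 0) sequentially"
  proof -
    have "(\<lambda>m. G (real m) * DZ) \<longlonglongrightarrow> DZ * DZ" using Glarge by (intro tendsto_mult_right)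
    moreover have "DZ * DZ > 0" using LDZ by (cases "DZ > 0") (auto intro: mult_pos_pos mult_neg_neg simp: not_less le_less)
    ultimately show ?thesis by (rule order_tendstoD(1))
  qed
  have ev3: "eventually (\<lambda>m. m \<ge> (1::nat)) sequentially" by (rule eventually_ge_at_top)
  obtain m where m: "Q m * L > 0" "G (real m) * DZ > 0" "m \<ge> 1"
    using eventually_happens'[OF _ eventually_conj[OF ev1 eventually_conj[OF ev2 ev3]]] by auto
  have sgn: "x * y < 0" if "x * l > 0" "y * d > 0" and ld: "l * d < 0" for x y l d :: real
  proof -
    have "(x * y) * (l * d) > 0" using mult_pos_pos[OF that(1) that(2)] by (simp add: ac_simps)
    show ?thesis
    proof (rule ccontr)
      assume "\<not> x * y < 0"
      then have "(x * y) * (l * d) \<le> 0" using ld mult_nonneg_nonpos[of "x * y" "l * d"] by linarith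
      with \<open>(x * y) * (l * d) > 0\<close> show False by simp
    qed
  qed
  have QG: "Q m * G (real m) < 0" by (rule sgn[OF m(1) m(2) LDZ])
  have "G (1 / real (Suc m)) * G (real m) \<le> 0"
  proof -
    have "G (1 / real (Suc m)) * G (real m) = (Q m * G (real m)) / real (Suc m)" unfolding GQ by simp
    also have "\<dots> \<le> 0" using QG by (intro divide_nonpos_nonneg) auto
    finally show ?thesis .
  qed
  moreover have "1 / real (Suc m) \<le> real m"
  proof -
    have "1 / real (Suc m) \<le> 1" by simp
    also have "1 \<le> real m" using m(3) by simp
    finally show ?thesis .
  qed
  ultimately have "\<exists>e>0. G e = 0" by (intro ivt) auto
  then show ?thesis unfolding G_def .
qed

end
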